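(* Let $X$ be a complete metric space, $\mathcal S=(X,(\phi_j)_{j=0}^{n-1})$ a Matkowski contractive GIFS of degree $m$ with attractor $A_{\mathcal S}$, and $u_{\mathcal Z}$ the fuzzy attractor of the GIFZS $\mathcal Z_{\mathcal S}=(X,(\phi_j)_{j=0}^{n-1},(\rho_j)_{j=0}^{n-1})$ (with $(\rho_j)$ admissible). Then for every nonempty compact $B\subseteq X$ and every $v\in\mathcal F_X^*$: (a) if $\mathcal Z_{\mathcal S}(v,\dots,v)\le v$ then $u_{\mathcal Z}\le v$; (b) if $\bigcup_j\phi_j(B\times\cdots\times B)\subseteq B$ then $A_{\mathcal S}\subseteq B$; (c) if $v\le\mathcal Z_{\mathcal S}(v,\dots,v)$ then $v\le u_{\mathcal Z}$; (d) if $B\subseteq\bigcup_j\phi_j(B\times\cdots\times B)$ then $B\subseteq A_{\mathcal S}$.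
   Context: A fuzzy subset of $X$ is $u:X\to[0,1]$; $u\le v$ means pointwise inequality. $\mathcal F_X^*$: fuzzy subsets that are normal, usc and compactly supported. $X^m$ has the maximum metric $d^m$. For $T:Z\to Y$, $T(u)(y)=\sup\{u(z):T(z)=y\}$ if $y\in T(Z)$, else $0$; $\rho(u)=\rho\circ u$; $(u_0\times\cdots\times u_{m-1})(x_0,\dots,x_{m-1})=\min_iu_i(x_i)$; $\vee$ is pointwise max. A family $(\rho_j)$ of maps $[0,1]\to[0,1]$ is admissible if each is nondecreasing, right continuous, $\rho_j(0)=0$, and $\rho_j(1)=1$ for some $j$. A GIFS of degree $m$ is $(X,(\phi_j))$ with continuous $\phi_j:X^m\to X$; it is Matkowski contractive if each $\phi_j$ satisfies $d(\phi_j(x),\phi_j(y))\le\varphi_j(d^m(x,y))$ for some nondecreasing $\varphi_j:[0,\infty)\to[0,\infty)$ with $\varphi_j^{(k)}(t)\to0$ for all $t>0$. For such $\mathcal S$ on complete $X$, its attractor $A_{\mathcal S}$ is the unique nonempty compact set with $A_{\mathcal S}=\bigcup_j\phi_j(A_{\mathcal S}\times\cdots\times A_{\mathcal S})$. The GIFZS operator is $\mathcal Z_{\mathcal S}(u_0,\dots,u_{m-1})=\bigvee_j\rho_j(\phi_j(u_0\times\cdots\times u_{m-1}))$ and the fuzzy attractor is the unique $u_{\mathcal Z}\in\mathcal F_X^*$ with $\mathcal Z_{\mathcal S}(u_{\mathcal Z},\dots,u_{\mathcal Z})=u_{\mathcal Z}$. *)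

theory Defs
  imports "HOL-Analysis.Analysis"
begin

text \<open>Fuzzy subsets of X are modelled as functions X \<Rightarrow> real taking values in [0,1].
  X^m is modelled as the vector type 'a^'m with 'm a finite index type of cardinality m.\<close>

definition fuzzy_set :: "('a \<Rightarrow> real) \<Rightarrow> bool" where
  "fuzzy_set u \<longleftrightarrow> (\<forall>x. 0 \<le> u x \<and> u x \<le> 1)"

definition fuzzy_support :: "('a::topological_space \<Rightarrow> real) \<Rightarrow> 'a set" where
  "fuzzy_support u = closure {x. 0 < u x}"

definition Fstar :: "('a::topological_space \<Rightarrow> real) set" where
  "Fstar = {u. fuzzy_set u \<and> (\<exists>x. u x = 1) \<and> (\<forall>\<alpha>. closed {x. \<alpha> \<le> u x})
              \<and> compact (fuzzy_support u)}"

definition dmax :: "('a::metric_space)^'m \<Rightarrow> 'a^'m \<Rightarrow> real" where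
  "dmax x y = Max (range (\<lambda>i. dist (x $ i) (y $ i)))"

definition fz_image :: "('z \<Rightarrow> 'y) \<Rightarrow> ('z \<Rightarrow> real) \<Rightarrow> 'y \<Rightarrow> real" where
  "fz_image T u y = (if y \<in> range T then Sup {u z | z. T z = y} else 0)"

definition fz_prod :: "('m::finite \<Rightarrow> 'a \<Rightarrow> real) \<Rightarrow> 'a^'m \<Rightarrow> real" where
  "fz_prod us x = Min (range (\<lambda>i. us i (x $ i)))"

definition admissible :: "nat \<Rightarrow> (nat \<Rightarrow> real \<Rightarrow> real) \<Rightarrow> bool" where
  "admissible n \<rho> \<longleftrightarrow>
     (\<forall>j<n. (\<forall>t\<in>{0..1}. \<rho> j t \<in> {0..1})
          \<and> (\<forall>s t. 0 \<le> s \<longrightarrow> s \<le> t \<longrightarrow> t \<le> 1 \<longrightarrow> \<rho> j s \<le> \<rho> j t)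
          \<and> (\<forall>t\<in>{0..<1}. continuous (at_right t) (\<rho> j))
          \<and> \<rho> j 0 = 0)
     \<and> (\<exists>j<n. \<rho> j 1 = 1)"

definition matkowski_GIFS :: "nat \<Rightarrow> (nat \<Rightarrow> ('a::metric_space)^'m \<Rightarrow> 'a) \<Rightarrow> bool" where
  "matkowski_GIFS n \<phi> \<longleftrightarrow>
     (\<forall>j<n. continuous_on UNIV (\<phi> j) \<and>
        (\<exists>\<psi>::real \<Rightarrow> real. mono_on {0..} \<psi> \<and> (\<forall>t\<ge>0. 0 \<le> \<psi> t)
           \<and> (\<forall>t>0. (\<lambda>k. (\<psi> ^^ k) t) \<longlonglongrightarrow> 0)
           \<and> (\<forall>x y. dist (\<phi> j x) (\<phi> j y) \<le> \<psi> (dmax x y))))"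

definition GIFS_op :: "nat \<Rightarrow> (nat \<Rightarrow> 'a^'m \<Rightarrow> 'a) \<Rightarrow> 'a set \<Rightarrow> 'a set" where
  "GIFS_op n \<phi> B = (\<Union>j<n. \<phi> j ` {x. \<forall>i. x $ i \<in> B})"

definition GIFS_attractor :: "nat \<Rightarrow> (nat \<Rightarrow> ('a::metric_space)^'m \<Rightarrow> 'a) \<Rightarrow> 'a set" where
  "GIFS_attractor n \<phi> = (THE A. A \<noteq> {} \<and> compact A \<and> A = GIFS_op n \<phi> A)"

definition GIFZS_op :: "nat \<Rightarrow> (nat \<Rightarrow> 'a^'m::finite \<Rightarrow> 'a) \<Rightarrow> (nat \<Rightarrow> real \<Rightarrow> real)
      \<Rightarrow> ('m \<Rightarrow> 'a \<Rightarrow> real) \<Rightarrow> 'a \<Rightarrow> real" where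
  "GIFZS_op n \<phi> \<rho> us = (\<lambda>x. Max ((\<lambda>j. \<rho> j (fz_image (\<phi> j) (fz_prod us) x)) ` {..<n}))"

definition fuzzy_attractor :: "nat \<Rightarrow> (nat \<Rightarrow> ('a::metric_space)^'m::finite \<Rightarrow> 'a)
      \<Rightarrow> (nat \<Rightarrow> real \<Rightarrow> real) \<Rightarrow> 'a \<Rightarrow> real" where
  "fuzzy_attractor n \<phi> \<rho> = (THE u. u \<in> Fstar \<and> GIFZS_op n \<phi> \<rho> (\<lambda>_. u) = u)"

end

theory Submission
  imports Defs
begin



definition cube :: "'a set \<Rightarrow> ('a^'m::finite) set" where
  "cube S = {z. \<forall>i. z $ i \<in> S}"

lemma cube_mono: "S \<subseteq> T \<Longrightarrow> cube S \<subseteq> cube T"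
  unfolding cube_def by auto

lemma cube_nonempty: "S \<noteq> {} \<Longrightarrow> (cube S :: ('a^'m::finite) set) \<noteq> {}"
proof -
  assume "S \<noteq> {}" then obtain s where "s \<in> S" by auto
  then have "(\<chi> i. s) \<in> (cube S :: ('a^'m::finite) set)" by (simp add: cube_def)
  then show ?thesis by auto
qed

lemma cube_subseq:
  fixes f :: "nat \<Rightarrow> ('a::metric_space)^('m::finite)"
  assumes S: "compact S" and f: "\<And>k i. f k $ i \<in> S" and D: "finite D"
  shows "\<exists>r l. strict_mono r \<and> (\<forall>i\<in>D. l i \<in> S \<and> ((\<lambda>k. f (r k) $ i) \<longlonglongrightarrow> l i))"
  using D
proof (induction D rule: finite_induct)
  case empty
  show ?case by (rule exI[of _ id], auto simp: strict_mono_def)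
next
  case (insert i D)
  then obtain r1 l1 where r1: "strict_mono r1" and l1: "\<forall>i\<in>D. l1 i \<in> S \<and> ((\<lambda>k. f (r1 k) $ i) \<longlonglongrightarrow> l1 i)"
    by blast
  have "\<forall>k. (\<lambda>k. f (r1 k) $ i) k \<in> S" using f by auto
  then obtain l2 r2 where l2: "l2 \<in> S" and r2: "strict_mono r2" and lim: "((\<lambda>k. f (r1 k) $ i) \<circ> r2) \<longlonglongrightarrow> l2"
    using seq_compactE[OF compact_imp_seq_compact[OF S]] by metis
  show ?case
  proof (intro exI conjI)
    show "strict_mono (r1 \<circ> r2)" using r1 r2 by (simp add: strict_mono_o)
    show "\<forall>j\<in>insert i D. (l1(i := l2)) j \<in> S \<and> ((\<lambda>k. f ((r1 \<circ> r2) k) $ j) \<longlonglongrightarrow> (l1(i := l2)) j)"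
    proof
      fix j assume j: "j \<in> insert i D"
      show "(l1(i := l2)) j \<in> S \<and> ((\<lambda>k. f ((r1 \<circ> r2) k) $ j) \<longlonglongrightarrow> (l1(i := l2)) j)"
      proof (cases "j = i")
        case True then show ?thesis using l2 lim by (simp add: o_def)
      next
        case False
        then have "j \<in> D" using j by auto
        then have "l1 j \<in> S" "(\<lambda>k. f (r1 k) $ j) \<longlonglongrightarrow> l1 j" using l1 by auto
        moreover have "((\<lambda>k. f (r1 k) $ j) \<circ> r2) \<longlonglongrightarrow> l1 j"
          by (rule LIMSEQ_subseq_LIMSEQ[OF calculation(2) r2])
        ultimately show ?thesis using False by (simp add: o_def)
      qed
    qed
  qed
qed

lemma compact_cube:
  assumes S: "compact (S::('a::metric_space) set)"
  shows "compact (cube S :: ('a^'m::finite) set)"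
  unfolding compact_eq_seq_compact_metric
proof (rule seq_compactI)
  fix f :: "nat \<Rightarrow> 'a^'m" assume "\<forall>n. f n \<in> cube S"
  then have f: "\<And>k i. f k $ i \<in> S" by (auto simp: cube_def)
  obtain r l where r: "strict_mono r" and l: "\<forall>i\<in>UNIV. l i \<in> S \<and> ((\<lambda>k. f (r k) $ i) \<longlonglongrightarrow> l i)"
    using cube_subseq[of S f UNIV] S f by auto
  have "(f \<circ> r) \<longlonglongrightarrow> (\<chi> i. l i)"
    by (rule vec_tendstoI) (use l in \<open>simp add: o_def\<close>)
  moreover have "(\<chi> i. l i) \<in> cube S" using l by (simp add: cube_def)
  ultimately show "\<exists>l\<in>cube S. \<exists>r. strict_mono r \<and> (f \<circ> r) \<longlonglongrightarrow> l" using r by blast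
qed

lemma nearest_point:
  fixes S :: "('a::metric_space) set"
  assumes "compact S" "S \<noteq> {}"
  shows "\<exists>y\<in>S. infdist x S = dist x y"
proof -
  have "continuous_on S (dist x)" by (intro continuous_intros)
  then obtain y where y: "y \<in> S" "\<forall>s\<in>S. dist x y \<le> dist x s"
    using continuous_attains_inf[OF assms] by blast
  have "infdist x S = dist x y"
  proof (rule antisym)
    show "infdist x S \<le> dist x y" by (rule infdist_le[OF y(1)])
    show "dist x y \<le> infdist x S" unfolding infdist_def using assms(2) y
      by (auto intro: cINF_greatest)
  qed
  then show ?thesis using y by blast
qed

lemma compact_nest:
  fixes C :: "nat \<Rightarrow> 'a::metric_space set"
  assumes c: "\<And>k. compact (C k)" and ne: "\<And>k. C k \<noteq> {}"
    and dec: "\<And>k k'. k \<le> k' \<Longrightarrow> C k' \<subseteq> C k"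
  shows "(\<Inter>k. C k) \<noteq> {}"
proof -
  have cl: "\<And>k. closed (C k)" using c by (simp add: compact_imp_closed)
  have "C 0 \<inter> (\<Inter>k\<in>UNIV. C k) \<noteq> {}"
  proof (rule compact_imp_fip_image[OF c])
    show "\<And>i. i \<in> UNIV \<Longrightarrow> closed (C i)" using cl by auto
    fix I' :: "nat set" assume I': "finite I'" "I' \<subseteq> UNIV"
    define M where "M = Max (insert 0 I')"
    have "\<And>k. k \<in> insert 0 I' \<Longrightarrow> k \<le> M" unfolding M_def using I' by auto
    then have "C M \<subseteq> C 0 \<inter> (\<Inter>i\<in>I'. C i)" using dec by blast
    then show "C 0 \<inter> (\<Inter>i\<in>I'. C i) \<noteq> {}" using ne[of M] by blast
  qed
  then show ?thesis by blast
qed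

lemma finite_choice_mono:
  fixes n :: nat
  assumes ex: "\<And>k::nat. \<exists>j<n. P j k" and mono: "\<And>j k k'. k \<le> k' \<Longrightarrow> P j k' \<Longrightarrow> P j k"
  shows "\<exists>j<n. \<forall>k. P j k"
proof (rule ccontr)
  assume "\<not> ?thesis"
  then have "\<forall>j. \<exists>k. j < n \<longrightarrow> \<not> P j k" by auto
  then obtain kk where kk: "\<And>j. j < n \<Longrightarrow> \<not> P j (kk j)" by metis
  define K where "K = Max (kk ` {..<n})"
  obtain j where j: "j < n" "P j K" using ex by blast
  have "kk j \<le> K" unfolding K_def using j by auto
  then have "P j (kk j)" using mono j by blast
  then show False using kk j by blast
qed

lemma dmax_nonneg: "0 \<le> dmax (x::('a::metric_space)^('m::finite)) y"
proof -
  obtain i :: 'm where True by simp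
  have "dist (x$i) (y$i) \<le> dmax x y" unfolding dmax_def by (rule Max_ge) auto
  then show ?thesis using zero_le_dist order_trans by blast
qed

lemma dmax_le: "(\<And>i. dist (x $ i) (y $ i) \<le> c) \<Longrightarrow> dmax (x::('a::metric_space)^('m::finite)) y \<le> c"
  unfolding dmax_def by (subst Max_le_iff) auto




lemma matk_lt:
  fixes \<psi> :: "real \<Rightarrow> real"
  assumes mono: "mono_on {0..} \<psi>" and nn: "\<And>t. 0 \<le> t \<Longrightarrow> 0 \<le> \<psi> t"
    and lim: "\<And>t. t > 0 \<Longrightarrow> (\<lambda>k. (\<psi> ^^ k) t) \<longlonglongrightarrow> 0" and t: "t > 0"
  shows "\<psi> t < t"
proof (rule ccontr)
  assume "\<not> \<psi> t < t" then have ge: "t \<le> \<psi> t" by simp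
  have "\<And>k. t \<le> (\<psi> ^^ k) t"
  proof -
    fix k show "t \<le> (\<psi> ^^ k) t"
    proof (induction k)
      case 0 then show ?case by simp
    next
      case (Suc k)
      have "\<psi> t \<le> \<psi> ((\<psi> ^^ k) t)" using mono Suc t by (intro mono_onD[OF mono]) auto
      then show ?case using ge by simp
    qed
  qed
  then have "t \<le> 0" by (intro LIMSEQ_le_const[OF lim[OF t]]) auto
  then show False using t by simp
qed

lemma matk_Q:
  fixes \<psi> :: "real \<Rightarrow> real"
  assumes mono: "mono_on {0..} \<psi>" and nn: "\<And>t. 0 \<le> t \<Longrightarrow> 0 \<le> \<psi> t"
    and lim: "\<And>t. t > 0 \<Longrightarrow> (\<lambda>k. (\<psi> ^^ k) t) \<longlonglongrightarrow> 0" and L: "L > 0"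
  shows "\<exists>s>L. \<psi> s \<le> L"
proof (rule ccontr)
  assume "\<not> ?thesis" then have gt: "\<And>s. s > L \<Longrightarrow> \<psi> s > L" by force
  have "\<And>k. L < (\<psi> ^^ k) (L+1)"
  proof -
    fix k show "L < (\<psi> ^^ k) (L+1)"
      by (induction k) (auto intro: gt)
  qed
  then have "L \<le> 0" using L by (intro LIMSEQ_le_const[OF lim[of "L+1"]]) (auto intro: less_imp_le)
  then show False using L by simp
qed

lemma seq_to_zero:
  fixes \<Psi> :: "real \<Rightarrow> real" and d :: "nat \<Rightarrow> real"
  assumes mono: "\<And>s t. 0 \<le> s \<Longrightarrow> s \<le> t \<Longrightarrow> \<Psi> s \<le> \<Psi> t"
    and lt: "\<And>t. t > 0 \<Longrightarrow> \<Psi> t < t"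
    and Q: "\<And>L. L > 0 \<Longrightarrow> \<exists>s>L. \<Psi> s \<le> L"
    and dnn: "\<And>k. 0 \<le> d k" and dstep: "\<And>k. d (Suc k) \<le> \<Psi> (d k)"
    and eta: "\<eta> > 0"
  shows "\<exists>k. d k < \<eta>"
proof (rule ccontr)
  assume "\<not> ?thesis" then have ge: "\<And>k. \<eta> \<le> d k" using not_less by blast
  have dec: "\<And>k. d (Suc k) \<le> d k"
  proof -
    fix k have "d k > 0" using ge[of k] eta by simp
    then show "d (Suc k) \<le> d k" using dstep[of k] lt[of "d k"] by simp
  qed
  then have decs: "decseq d" by (simp add: decseq_SucI)
  obtain L where L: "d \<longlonglongrightarrow> L"
    using decseq_convergent[OF decs, of \<eta>] ge by blast
  have Lge: "\<eta> \<le> L" using ge by (intro LIMSEQ_le_const[OF L]) auto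
  have dL: "\<And>k. L \<le> d k" using decs L by (simp add: decseq_ge)
  obtain s where s: "s > L" "\<Psi> s \<le> L" using Q[of L] Lge eta by auto
  then have "eventually (\<lambda>k. d k < s) sequentially" using L by (simp add: order_tendstoD(2))
  then obtain k where k: "d k < s" by (meson eventually_sequentially le_refl)
  have "d (Suc k) \<le> L" using dstep[of k] mono[of "d k" s] k dnn s by simp
  then have "d (Suc k) = L" using dL[of "Suc k"] by simp
  then have "d (Suc (Suc k)) \<le> \<Psi> L" using dstep[of "Suc k"] by simp
  also have "\<dots> < L" using lt Lge eta by simp
  finally show False using dL[of "Suc (Suc k)"] by simp
qed

locale gifs =
  fixes n :: nat and \<phi> :: "nat \<Rightarrow> ('a::complete_space)^('m::finite) \<Rightarrow> 'a" and \<psi> :: "nat \<Rightarrow> real \<Rightarrow> real"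
  assumes npos: "0 < n"
    and cont: "\<And>j. j < n \<Longrightarrow> continuous_on UNIV (\<phi> j)"
    and psimono: "\<And>j. j < n \<Longrightarrow> mono_on {0..} (\<psi> j)"
    and psinn: "\<And>j t. j < n \<Longrightarrow> 0 \<le> t \<Longrightarrow> 0 \<le> \<psi> j t"
    and psilim: "\<And>j t. j < n \<Longrightarrow> t > 0 \<Longrightarrow> (\<lambda>k. (\<psi> j ^^ k) t) \<longlonglongrightarrow> 0"
    and contr: "\<And>j x y. j < n \<Longrightarrow> dist (\<phi> j x) (\<phi> j y) \<le> \<psi> j (dmax x y)"
begin

definition Psi :: "real \<Rightarrow> real" where
  "Psi t = Max ((\<lambda>j. \<psi> j t) ` {..<n})"

abbreviation F :: "'a set \<Rightarrow> 'a set" where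
  "F S \<equiv> GIFS_op n \<phi> S"

lemma F_def': "F S = (\<Union>j<n. \<phi> j ` cube S)"
  unfolding GIFS_op_def cube_def by simp

lemma Psi_ge: "j < n \<Longrightarrow> \<psi> j t \<le> Psi t"
  unfolding Psi_def by (rule Max_ge) auto

lemma Psi_lt: "t > 0 \<Longrightarrow> Psi t < t"
  unfolding Psi_def using npos
  by (subst Max_less_iff) (auto intro: matk_lt[OF psimono psinn psilim])

lemma Psi_nn: "0 \<le> t \<Longrightarrow> 0 \<le> Psi t"
  using Psi_ge[of 0 t] psinn[of 0 t] npos by simp

lemma Psi_mono:
  assumes st: "0 \<le> s" "s \<le> t" shows "Psi s \<le> Psi t"
proof -
  have "\<And>j. j < n \<Longrightarrow> \<psi> j s \<le> Psi t"
  proof -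
    fix j assume j: "j < n"
    have "\<psi> j s \<le> \<psi> j t" using st by (intro mono_onD[OF psimono[OF j]]) auto
    then show "\<psi> j s \<le> Psi t" using Psi_ge[OF j, of t] by simp
  qed
  then show ?thesis unfolding Psi_def[of s] using npos by (subst Max_le_iff) auto
qed

lemma Psi_Q:
  assumes L: "L > 0" shows "\<exists>s>L. Psi s \<le> L"
proof -
  have "\<forall>j. \<exists>s. j < n \<longrightarrow> s > L \<and> \<psi> j s \<le> L"
    using matk_Q[OF psimono psinn psilim L] by metis
  then obtain ss where ss: "\<And>j. j < n \<Longrightarrow> ss j > L \<and> \<psi> j (ss j) \<le> L" by metis
  define s where "s = Min (ss ` {..<n})"
  have sL: "s > L" unfolding s_def using npos ss by (subst Min_gr_iff) auto
  have "\<And>j. j < n \<Longrightarrow> \<psi> j s \<le> L"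
  proof -
    fix j assume j: "j < n"
    have "s \<le> ss j" unfolding s_def using j by (intro Min_le) auto
    then have "\<psi> j s \<le> \<psi> j (ss j)" using sL L by (intro mono_onD[OF psimono[OF j]]) auto
    then show "\<psi> j s \<le> L" using ss[OF j] by simp
  qed
  then have "Psi s \<le> L" unfolding Psi_def using npos by (subst Max_le_iff) auto
  then show ?thesis using sL by blast
qed

lemma step:
  assumes j: "j < n" and d: "\<And>i. dist (z $ i) (y $ i) \<le> c"
  shows "dist (\<phi> j z) (\<phi> j y) \<le> Psi c"
proof -
  have "dmax z y \<le> c" by (rule dmax_le[OF d])
  moreover have "0 \<le> dmax z y" by (rule dmax_nonneg)
  ultimately have "\<psi> j (dmax z y) \<le> \<psi> j c"
    by (intro mono_onD[OF psimono[OF j]]) auto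
  then show ?thesis using contr[OF j, of z y] Psi_ge[OF j, of c] by simp
qed

lemma approx_vec:
  assumes Q: "compact Q" "Q \<noteq> {}" and d: "\<And>i. infdist (z $ i) Q \<le> c"
  shows "\<exists>y\<in>cube Q. \<forall>i. dist (z $ i) (y $ i) \<le> c"
proof -
  have "\<forall>i. \<exists>q\<in>Q. infdist (z $ i) Q = dist (z $ i) q" using nearest_point[OF Q] by blast
  then obtain q where q: "\<And>i. q i \<in> Q \<and> infdist (z $ i) Q = dist (z $ i) (q i)" by metis
  show ?thesis
    by (rule bexI[of _ "\<chi> i. q i"]) (use q d in \<open>auto simp: cube_def\<close>)
qed

lemma phi_compact: "j < n \<Longrightarrow> compact S \<Longrightarrow> compact (\<phi> j ` cube S)"
  by (rule compact_continuous_image[OF continuous_on_subset[OF cont] compact_cube]) auto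

lemma F_compact: "compact S \<Longrightarrow> compact (F S)"
  unfolding F_def' by (rule compact_UN) (auto intro: phi_compact)

lemma F_nonempty: "S \<noteq> {} \<Longrightarrow> F S \<noteq> {}"
  unfolding F_def' using npos cube_nonempty[of S] by blast

lemma F_mono: "S \<subseteq> T \<Longrightarrow> F S \<subseteq> F T"
  unfolding F_def' using cube_mono by blast

lemma excess:
  assumes Q: "\<And>a. a \<in> I \<Longrightarrow> compact (Q a) \<and> Q a \<noteq> {}"
    and bound: "\<And>a x. a \<in> I \<Longrightarrow> x \<in> P a \<Longrightarrow> infdist x (Q a) \<le> R"
    and stp: "\<And>a x. a \<in> I \<Longrightarrow> x \<in> P a \<Longrightarrow>
        \<exists>j<n. \<exists>b\<in>I. \<exists>z\<in>cube (P b). x = \<phi> j z \<and> (\<forall>y\<in>cube (Q b). \<phi> j y \<in> Q a)"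
    and a: "a \<in> I"
  shows "P a \<subseteq> Q a"
proof
  fix x assume x: "x \<in> P a"
  define V where "V = {infdist x (Q a) | a x. a \<in> I \<and> x \<in> P a}"
  define E where "E = Sup V"
  have bdd: "bdd_above V" unfolding V_def by (rule bdd_aboveI[of _ R]) (auto intro: bound)
  have Vne: "V \<noteq> {}" unfolding V_def using a x by blast
  have up: "\<And>a x. a \<in> I \<Longrightarrow> x \<in> P a \<Longrightarrow> infdist x (Q a) \<le> E"
    unfolding E_def by (rule cSup_upper[OF _ bdd]) (auto simp: V_def)
  have E0: "0 \<le> E" using up[OF a x] infdist_nonneg order_trans by blast
  have "\<And>a x. a \<in> I \<Longrightarrow> x \<in> P a \<Longrightarrow> infdist x (Q a) \<le> Psi E"
  proof -
    fix a x assume a: "a \<in> I" and x: "x \<in> P a"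
    obtain j b z where j: "j < n" and b: "b \<in> I" and z: "z \<in> cube (P b)" and xz: "x = \<phi> j z"
      and yQ: "\<forall>y\<in>cube (Q b). \<phi> j y \<in> Q a"
      using stp[OF a x] by blast
    have "\<And>i. infdist (z $ i) (Q b) \<le> E" using z b up by (auto simp: cube_def)
    then obtain y where y: "y \<in> cube (Q b)" "\<And>i. dist (z $ i) (y $ i) \<le> E"
      using approx_vec Q[OF b] by blast
    have "infdist x (Q a) \<le> dist x (\<phi> j y)" using yQ y(1) by (intro infdist_le) auto
    also have "\<dots> \<le> Psi E" unfolding xz by (rule step[OF j y(2)])
    finally show "infdist x (Q a) \<le> Psi E" .
  qed
  then have "E \<le> Psi E" unfolding E_def using Vne by (intro cSup_least) (auto simp: V_def E_def)
  then have "E = 0" using Psi_lt[of E] E0 by force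
  then have "infdist x (Q a) = 0" using up[OF a x] infdist_nonneg[of x "Q a"] by simp
  then have "x \<in> closure (Q a)" using in_closure_iff_infdist_zero Q[OF a] by blast
  then show "x \<in> Q a" using Q[OF a] by (simp add: compact_imp_closed closure_closed)
qed

lemma crisp_le:
  assumes P: "compact P" "P \<noteq> {}" "P \<subseteq> F P" and Q: "compact Q" "Q \<noteq> {}" "F Q \<subseteq> Q"
  shows "P \<subseteq> Q"
proof -
  have bP: "bounded (P \<union> Q)" using P Q by (simp add: compact_imp_bounded)
  obtain q0 where q0: "q0 \<in> Q" using Q by auto
  have "(\<lambda>_::unit. P) () \<subseteq> (\<lambda>_. Q) ()"
  proof (rule excess[where I=UNIV and R="diameter (P \<union> Q)" and P="\<lambda>_. P" and Q="\<lambda>_. Q" and a="()"])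
    show "\<And>a. a \<in> UNIV \<Longrightarrow> compact Q \<and> Q \<noteq> {}" using Q by auto
    show "\<And>a x. a \<in> UNIV \<Longrightarrow> x \<in> P \<Longrightarrow> infdist x Q \<le> diameter (P \<union> Q)"
    proof -
      fix x assume "x \<in> P"
      then have "dist x q0 \<le> diameter (P \<union> Q)" using q0 bP by (intro diameter_bounded_bound) auto
      then show "infdist x Q \<le> diameter (P \<union> Q)" using infdist_le[OF q0, of x] by simp
    qed
    show "\<And>a x. a \<in> UNIV \<Longrightarrow> x \<in> P \<Longrightarrow>
        \<exists>j<n. \<exists>b\<in>UNIV. \<exists>z\<in>cube P. x = \<phi> j z \<and> (\<forall>y\<in>cube Q. \<phi> j y \<in> Q)"
    proof -
      fix x assume "x \<in> P"
      then have "x \<in> F P" using P by auto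
      then obtain j z where "j < n" "z \<in> cube P" "x = \<phi> j z" unfolding F_def' by blast
      moreover have "\<forall>y\<in>cube Q. \<phi> j y \<in> Q" using Q(3) \<open>j < n\<close> unfolding F_def' by blast
      ultimately show "\<exists>j<n. \<exists>b\<in>UNIV. \<exists>z\<in>cube P. x = \<phi> j z \<and> (\<forall>y\<in>cube Q. \<phi> j y \<in> Q)" by blast
    qed
  qed simp
  then show ?thesis by simp
qed

end



context gifs
begin

lemma fibre_closed: "j < n \<Longrightarrow> closed {z. \<phi> j z = y}"
  by (rule closed_Collect_eq[OF cont continuous_on_const])

lemma exists_invariant: "\<exists>K. compact K \<and> K \<noteq> {} \<and> F K \<subseteq> K"
proof -
  obtain x0 :: 'a where True by simp
  define G where "G S = insert x0 (F S)" for S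
  define S where "S k = (G ^^ k) {x0}" for k
  have S0: "S 0 = {x0}" unfolding S_def by simp
  have SS: "S (Suc k) = insert x0 (F (S k))" for k unfolding S_def G_def by simp
  have Sc: "compact (S k) \<and> S k \<noteq> {}" for k
    by (induction k) (auto simp: S0 SS F_compact)
  have x0S: "x0 \<in> S k" for k by (cases k) (auto simp: S0 SS)
  have Snest: "S k \<subseteq> S (Suc k)" for k
  proof (induction k)
    case 0 then show ?case by (simp add: S0 SS)
  next
    case (Suc k) then show ?case unfolding SS[of "Suc k"] SS[of k] using F_mono by blast
  qed
  have Smono: "k \<le> k' \<Longrightarrow> S k \<subseteq> S k'" for k k'
    by (rule lift_Suc_mono_le[of S, OF Snest])
  define D where "D k = Sup ((\<lambda>x. infdist x (S k)) ` S (Suc k))" for k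
  have bddD: "bdd_above ((\<lambda>x. infdist x (S k)) ` S (Suc k))" for k
  proof -
    have "continuous_on (S (Suc k)) (\<lambda>x. infdist x (S k))"
      by (rule continuous_on_infdist[OF continuous_on_id])
    then have "compact ((\<lambda>x. infdist x (S k)) ` S (Suc k))"
      using Sc[of "Suc k"] by (blast intro: compact_continuous_image)
    then show ?thesis by (intro bounded_imp_bdd_above compact_imp_bounded)
  qed
  have Dup: "x \<in> S (Suc k) \<Longrightarrow> infdist x (S k) \<le> D k" for x k
    unfolding D_def by (rule cSup_upper[OF _ bddD]) auto
  have Dnn: "0 \<le> D k" for k using Dup[OF x0S[of "Suc k"]] infdist_nonneg[of x0 "S k"] by linarith
  have Dstep: "D (Suc k) \<le> Psi (D k)" for k
    unfolding D_def[of "Suc k"]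
  proof (rule cSup_least)
    show "(\<lambda>x. infdist x (S (Suc k))) ` S (Suc (Suc k)) \<noteq> {}" using x0S by blast
    fix t assume "t \<in> (\<lambda>x. infdist x (S (Suc k))) ` S (Suc (Suc k))"
    then obtain x where x: "x \<in> S (Suc (Suc k))" and t: "t = infdist x (S (Suc k))" by blast
    show "t \<le> Psi (D k)"
    proof (cases "x = x0")
      case True then show ?thesis using t x0S Psi_nn[OF Dnn[of k]] by simp
    next
      case False
      then have "x \<in> F (S (Suc k))" using x unfolding SS[of "Suc k"] by blast
      then obtain j z where j: "j < n" and z: "z \<in> cube (S (Suc k))" and xz: "x = \<phi> j z"
        unfolding F_def' by blast
      have "\<And>i. infdist (z $ i) (S k) \<le> D k" using z Dup by (auto simp: cube_def)
      then obtain y where y: "y \<in> cube (S k)" "\<And>i. dist (z $ i) (y $ i) \<le> D k"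
        using approx_vec[OF conjunct1[OF Sc] conjunct2[OF Sc]] by blast
      have "\<phi> j y \<in> S (Suc k)" using y(1) j unfolding SS F_def' by blast
      then have "t \<le> dist x (\<phi> j y)" unfolding t by (rule infdist_le)
      also have "\<dots> \<le> Psi (D k)" unfolding xz by (rule step[OF j y(2)])
      finally show ?thesis .
    qed
  qed
  have Dsmall: "\<exists>k. D k < \<eta>" if "\<eta> > 0" for \<eta>
    by (rule seq_to_zero[of Psi D, OF Psi_mono Psi_lt Psi_Q Dnn Dstep that])
  have ball: "\<exists>k. \<forall>N. \<forall>x\<in>S (k+N). infdist x (S k) \<le> r" if r: "r > 0" for r
  proof -
    obtain k where k: "D k < r - Psi r" using Dsmall Psi_lt[OF r] by force
    have "\<forall>x\<in>S (k+N). infdist x (S k) \<le> r" for N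
    proof (induction N)
      case 0 then show ?case using r by simp
    next
      case (Suc N)
      show ?case
      proof
        fix x assume x: "x \<in> S (k + Suc N)"
        show "infdist x (S k) \<le> r"
        proof (cases "x = x0")
          case True then show ?thesis using x0S r by simp
        next
          case False
          then have "x \<in> F (S (k+N))" using x unfolding add_Suc_right SS[of "k+N"] by blast
          then obtain j z where j: "j < n" and z: "z \<in> cube (S (k+N))" and xz: "x = \<phi> j z"
            unfolding F_def' by blast
          have "\<And>i. infdist (z $ i) (S k) \<le> r" using z Suc by (auto simp: cube_def)
          then obtain y where y: "y \<in> cube (S k)" "\<And>i. dist (z $ i) (y $ i) \<le> r"
            using approx_vec[OF conjunct1[OF Sc] conjunct2[OF Sc]] by blast
          have "\<phi> j y \<in> S (Suc k)" using y(1) j unfolding SS F_def' by blast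
          then have "infdist (\<phi> j y) (S k) \<le> D k" by (rule Dup)
          moreover have "dist x (\<phi> j y) \<le> Psi r" unfolding xz by (rule step[OF j y(2)])
          moreover have "infdist x (S k) \<le> infdist (\<phi> j y) (S k) + dist x (\<phi> j y)"
            by (rule infdist_triangle)
          ultimately show ?thesis using k by linarith
        qed
      qed
    qed
    then show ?thesis by blast
  qed
  define U where "U = (\<Union>k. S k)"
  have FU: "F U \<subseteq> U"
  proof
    fix x assume "x \<in> F U"
    then obtain j z where j: "j < n" and z: "z \<in> cube U" and xz: "x = \<phi> j z"
      unfolding F_def' by blast
    have "\<forall>i. \<exists>k. z $ i \<in> S k" using z by (auto simp: cube_def U_def)
    then obtain kk where kk: "\<And>i. z $ i \<in> S (kk i)" by metis
    define M where "M = Max (range kk)"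
    have "\<And>i. kk i \<le> M" unfolding M_def by (rule Max_ge) auto
    then have "z \<in> cube (S M)" using kk Smono unfolding cube_def by blast
    then have "x \<in> S (Suc M)" using j unfolding xz SS F_def' by blast
    then show "x \<in> U" unfolding U_def by blast
  qed
  define K where "K = closure U"
  have Kc: "compact K"
    unfolding compact_eq_totally_bounded
  proof
    show "complete K" unfolding K_def complete_eq_closed by simp
    show "\<forall>\<epsilon>>0. \<exists>k. finite k \<and> K \<subseteq> (\<Union>x\<in>k. ball x \<epsilon>)"
    proof (intro allI impI)
      fix \<epsilon> :: real assume e: "\<epsilon> > 0"
      obtain k where k: "\<And>N x. x \<in> S (k+N) \<Longrightarrow> infdist x (S k) \<le> \<epsilon>/4"
        using ball[of "\<epsilon>/4"] e by auto
      define C where "C = (\<Union>i\<le>k. S i)"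
      have "compact C" unfolding C_def using Sc by blast
      then have tb: "\<forall>\<epsilon>>0. \<exists>k. finite k \<and> C \<subseteq> (\<Union>x\<in>k. ball x \<epsilon>)"
        unfolding compact_eq_totally_bounded by blast
      have e4: "\<epsilon>/4 > 0" using e by simp
      obtain C' where C': "finite C'" "C \<subseteq> (\<Union>c\<in>C'. ball c (\<epsilon>/4))"
        using tb e4 by blast
      have "U \<subseteq> (\<Union>c\<in>C'. cball c (\<epsilon>/2))"
      proof
        fix x assume "x \<in> U"
        then obtain m where m: "x \<in> S m" unfolding U_def by blast
        show "x \<in> (\<Union>c\<in>C'. cball c (\<epsilon>/2))"
        proof (cases "m \<le> k")
          case True
          then have "x \<in> C" unfolding C_def using m by blast
          then obtain c where c: "c \<in> C'" "x \<in> ball c (\<epsilon>/4)" using C' by blast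
          then have "x \<in> cball c (\<epsilon>/2)" using e by (simp add: mem_ball mem_cball)
          then show ?thesis using c by blast
        next
          case False
          define N where "N = m - k"
          have "m = k + N" using False unfolding N_def by simp
          then have inf: "infdist x (S k) \<le> \<epsilon>/4" using k m by blast
          obtain y where y: "y \<in> S k" "infdist x (S k) = dist x y"
            using nearest_point[OF conjunct1[OF Sc] conjunct2[OF Sc]] by blast
          have "y \<in> C" unfolding C_def using y by blast
          then obtain c where c: "c \<in> C'" "y \<in> ball c (\<epsilon>/4)" using C' by blast
          have "dist c x \<le> dist c y + dist y x" by (rule dist_triangle)
          moreover have "dist c y < \<epsilon>/4" using c by (simp add: mem_ball)
          moreover have "dist y x \<le> \<epsilon>/4" using y inf by (simp add: dist_commute)
          ultimately have "x \<in> cball c (\<epsilon>/2)" by (simp add: mem_cball)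
          then show ?thesis using c by blast
        qed
      qed
      moreover have "closed (\<Union>c\<in>C'. cball c (\<epsilon>/2))" using C'(1) by (intro closed_UN) auto
      ultimately have "K \<subseteq> (\<Union>c\<in>C'. cball c (\<epsilon>/2))"
        unfolding K_def by (rule closure_minimal)
      also have "\<dots> \<subseteq> (\<Union>c\<in>C'. ball c \<epsilon>)"
      proof (rule UN_mono)
        fix c show "cball c (\<epsilon>/2) \<subseteq> ball c \<epsilon>" using e by (auto simp: mem_ball mem_cball)
      qed simp
      finally show "\<exists>k. finite k \<and> K \<subseteq> (\<Union>x\<in>k. ball x \<epsilon>)" using C' by blast
    qed
  qed
  have FK: "F K \<subseteq> K"
  proof
    fix x assume "x \<in> F K"
    then obtain j z where j: "j < n" and z: "z \<in> cube K" and xz: "x = \<phi> j z"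
      unfolding F_def' by blast
    show "x \<in> K" unfolding K_def closure_approachable
    proof (intro allI impI)
      fix e :: real assume e: "e > 0"
      have "\<forall>i. \<exists>y\<in>U. dist (z $ i) y < e"
        using z e unfolding cube_def K_def by (auto intro: closure_approachableD)
      then obtain yy where yy: "\<And>i. yy i \<in> U \<and> dist (z $ i) (yy i) < e" by metis
      define y where "y = (\<chi> i. yy i)"
      have yU: "y \<in> cube U" using yy by (simp add: y_def cube_def)
      have "\<phi> j y \<in> U" using FU yU j unfolding F_def' by blast
      moreover have "dist (\<phi> j z) (\<phi> j y) \<le> Psi e"
        by (rule step[OF j]) (use yy in \<open>auto simp: y_def less_imp_le\<close>)
      ultimately show "\<exists>y\<in>U. dist y x < e" using Psi_lt[OF e] xz
        by (metis dist_commute le_less_trans)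
    qed
  qed
  have "K \<noteq> {}" using x0S[of 0] unfolding K_def U_def by (metis UN_I closure_subset empty_iff iso_tuple_UNIV_I subsetD)
  then show ?thesis using Kc FK by blast
qed

lemma attractor_exists: "\<exists>A. A \<noteq> {} \<and> compact A \<and> A = F A"
proof -
  obtain K where K: "compact K" "K \<noteq> {}" "F K \<subseteq> K" using exists_invariant by blast
  define C where "C k = (F ^^ k) K" for k
  have CS: "C (Suc k) = F (C k)" for k unfolding C_def by simp
  have Cc: "compact (C k) \<and> C k \<noteq> {}" for k
    by (induction k) (simp_all add: C_def K F_compact F_nonempty)
  have Cdec: "C (Suc k) \<subseteq> C k" for k
  proof (induction k)
    case 0 then show ?case using K by (simp add: C_def)
  next
    case (Suc k) then show ?case unfolding CS[of "Suc k"] CS[of k] using F_mono by blast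
  qed
  have Cmono: "k \<le> k' \<Longrightarrow> C k' \<subseteq> C k" for k k'
    by (rule lift_Suc_antimono_le[of C, OF Cdec])
  define A where "A = (\<Inter>k. C k)"
  have Ane: "A \<noteq> {}" unfolding A_def using Cc Cmono by (intro compact_nest) auto
  have "closed A" unfolding A_def using Cc by (intro closed_INT) (auto intro: compact_imp_closed)
  moreover have "A \<subseteq> C 0" unfolding A_def by blast
  ultimately have Acomp: "compact A"
    using Cc[of 0] closed_Int_compact[of A "C 0"] by (simp add: Int_absorb2)
  have "F A \<subseteq> A"
  proof -
    have "F A \<subseteq> C k" for k
    proof -
      have "F A \<subseteq> F (C k)" unfolding A_def by (intro F_mono) auto
      then show ?thesis using Cdec[of k] CS[of k] by simp
    qed
    then show ?thesis unfolding A_def by blast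
  qed
  moreover have "A \<subseteq> F A"
  proof
    fix y assume yA: "y \<in> A"
    have "\<And>k. \<exists>j<n. y \<in> \<phi> j ` cube (C k)"
    proof -
      fix k have "y \<in> C (Suc k)" using yA unfolding A_def by blast
      then show "\<exists>j<n. y \<in> \<phi> j ` cube (C k)" unfolding CS F_def' by blast
    qed
    moreover have "\<And>j k k'. k \<le> k' \<Longrightarrow> y \<in> \<phi> j ` cube (C k') \<Longrightarrow> y \<in> \<phi> j ` cube (C k)"
    proof -
      fix j k k' assume "k \<le> (k'::nat)" "y \<in> \<phi> j ` cube (C k')"
      moreover have "cube (C k') \<subseteq> cube (C k)" by (rule cube_mono[OF Cmono[OF calculation(1)]])
      ultimately show "y \<in> \<phi> j ` cube (C k)" by blast
    qed
    ultimately obtain j where j: "j < n" and jall: "\<And>k. y \<in> \<phi> j ` cube (C k)"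
      using finite_choice_mono[of n "\<lambda>j k. y \<in> \<phi> j ` cube (C k)"] by blast
    define E where "E k = {z. \<phi> j z = y} \<inter> cube (C k)" for k
    have "(\<Inter>k. E k) \<noteq> {}"
    proof (rule compact_nest)
      show "compact (E k)" for k unfolding E_def
        by (rule closed_Int_compact[OF fibre_closed[OF j] compact_cube[OF conjunct1[OF Cc]]])
      show "E k \<noteq> {}" for k unfolding E_def using jall[of k] by blast
      show "k \<le> k' \<Longrightarrow> E k' \<subseteq> E k" for k k'
      proof -
        assume "k \<le> k'"
        then have "cube (C k') \<subseteq> cube (C k)" by (rule cube_mono[OF Cmono])
        then show ?thesis unfolding E_def by blast
      qed
    qed
    then obtain z where "\<And>k. z \<in> E k" by blast
    then have "\<phi> j z = y" "z \<in> cube A" unfolding E_def A_def cube_def by auto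
    then show "y \<in> F A" using j unfolding F_def' by blast
  qed
  ultimately show ?thesis using Ane Acomp by blast
qed

lemma attractor_unique:
  assumes "A \<noteq> {}" "compact A" "A = F A" "A' \<noteq> {}" "compact A'" "A' = F A'"
  shows "A = A'"
  using crisp_le[of A A'] crisp_le[of A' A] assms by auto

lemma GIFS_attractor_eq:
  assumes "A \<noteq> {}" "compact A" "A = F A"
  shows "GIFS_attractor n \<phi> = A"
  unfolding GIFS_attractor_def
  by (rule the_equality) (use assms attractor_unique in blast)+

end



definition lev :: "('a \<Rightarrow> real) \<Rightarrow> real \<Rightarrow> 'a set" where
  "lev u a = {x. a \<le> u x}"

lemma fzprod_ge: "\<beta> \<le> fz_prod (\<lambda>_. u) (z::'a^('m::finite)) \<longleftrightarrow> (\<forall>i. \<beta> \<le> u (z $ i))"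
  unfolding fz_prod_def by (subst Min_ge_iff) auto

lemma fzprod_le: "fz_prod (\<lambda>_. u) (z::'a^('m::finite)) \<le> u (z $ i)"
  unfolding fz_prod_def by (rule Min_le) auto

lemma fzprod_01: "fuzzy_set u \<Longrightarrow> 0 \<le> fz_prod (\<lambda>_. u) (z::'a^('m::finite)) \<and> fz_prod (\<lambda>_. u) z \<le> 1"
proof -
  assume u: "fuzzy_set u"
  obtain i :: 'm where True by simp
  have "0 \<le> fz_prod (\<lambda>_. u) z" using u unfolding fuzzy_set_def by (subst fzprod_ge) auto
  moreover have "u (z $ i) \<le> 1" using u unfolding fuzzy_set_def by blast
  then have "fz_prod (\<lambda>_. u) z \<le> 1" using fzprod_le[of u z i] by linarith
  ultimately show ?thesis by simp
qed

lemma lev_supp: "t > 0 \<Longrightarrow> lev u t \<subseteq> fuzzy_support u"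
  unfolding lev_def fuzzy_support_def using closure_subset by fastforce

lemma lev_compact: "u \<in> Fstar \<Longrightarrow> t > 0 \<Longrightarrow> compact (lev u t)"
proof -
  assume u: "u \<in> Fstar" and t: "t > 0"
  have "closed (lev u t)" using u unfolding Fstar_def lev_def by blast
  moreover have "compact (fuzzy_support u)" using u unfolding Fstar_def by blast
  ultimately have "compact (lev u t \<inter> fuzzy_support u)" by (rule closed_Int_compact)
  moreover have "lev u t \<inter> fuzzy_support u = lev u t" using lev_supp[OF t, of u] by blast
  ultimately show ?thesis by simp
qed

lemma lev_nonempty: "u \<in> Fstar \<Longrightarrow> t \<le> 1 \<Longrightarrow> lev u t \<noteq> {}"
proof -
  assume u: "u \<in> Fstar" and t: "t \<le> 1"
  then obtain x where "u x = 1" unfolding Fstar_def by blast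
  then have "x \<in> lev u t" using t unfolding lev_def by simp
  then show ?thesis by blast
qed

lemma Fstar_01: "u \<in> Fstar \<Longrightarrow> 0 \<le> u x \<and> u x \<le> 1"
  unfolding Fstar_def fuzzy_set_def by blast

locale gifzs = gifs n \<phi> \<psi> for n and \<phi> :: "nat \<Rightarrow> ('a::complete_space)^('m::finite) \<Rightarrow> 'a" and \<psi> +
  fixes \<rho> :: "nat \<Rightarrow> real \<Rightarrow> real"
  assumes adm: "admissible n \<rho>"
begin

lemma rho01: "j < n \<Longrightarrow> 0 \<le> t \<Longrightarrow> t \<le> 1 \<Longrightarrow> 0 \<le> \<rho> j t \<and> \<rho> j t \<le> 1"
  using adm unfolding admissible_def by auto

lemma rhomono: "j < n \<Longrightarrow> 0 \<le> s \<Longrightarrow> s \<le> t \<Longrightarrow> t \<le> 1 \<Longrightarrow> \<rho> j s \<le> \<rho> j t"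
  using adm unfolding admissible_def by blast

lemma rhoright: "j < n \<Longrightarrow> 0 \<le> t \<Longrightarrow> t < 1 \<Longrightarrow> continuous (at_right t) (\<rho> j)"
  using adm unfolding admissible_def by auto

lemma rho0: "j < n \<Longrightarrow> \<rho> j 0 = 0"
  using adm unfolding admissible_def by blast

lemma rho1: "\<exists>j<n. \<rho> j 1 = 1"
  using adm unfolding admissible_def by blast

abbreviation Z :: "('a \<Rightarrow> real) \<Rightarrow> 'a \<Rightarrow> real" where
  "Z u \<equiv> GIFZS_op n \<phi> \<rho> (\<lambda>_. u)"

definition fzi :: "nat \<Rightarrow> ('a \<Rightarrow> real) \<Rightarrow> 'a \<Rightarrow> real" where
  "fzi j u y = fz_image (\<phi> j) (fz_prod (\<lambda>_. u)) y"

lemma Z_eq: "Z u y = Max ((\<lambda>j. \<rho> j (fzi j u y)) ` {..<n})"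
  unfolding GIFZS_op_def fzi_def by simp

lemma fzi_bounds:
  assumes u: "fuzzy_set u" shows "0 \<le> fzi j u y \<and> fzi j u y \<le> 1"
proof (cases "y \<in> range (\<phi> j)")
  case False then show ?thesis unfolding fzi_def fz_image_def by simp
next
  case True
  define G where "G = {fz_prod (\<lambda>_. u) z | z. \<phi> j z = y}"
  have Gne: "G \<noteq> {}" using True unfolding G_def by auto
  have G01: "\<And>g. g \<in> G \<Longrightarrow> 0 \<le> g \<and> g \<le> 1" unfolding G_def using fzprod_01[OF u] by blast
  have bdd: "bdd_above G" using G01 by (intro bdd_aboveI[of _ 1]) auto
  have eq: "fzi j u y = Sup G" unfolding fzi_def fz_image_def G_def using True by simp
  obtain g where g: "g \<in> G" using Gne by blast
  have "g \<le> Sup G" by (rule cSup_upper[OF g bdd])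
  moreover have "Sup G \<le> 1" using Gne G01 by (intro cSup_least) auto
  ultimately show ?thesis using eq G01[OF g] by simp
qed

lemma fzi_ge:
  assumes u: "fuzzy_set u" and z: "\<phi> j z = y"
  shows "fz_prod (\<lambda>_. u) z \<le> fzi j u y"
proof -
  have True': "y \<in> range (\<phi> j)" using z by blast
  define G where "G = {fz_prod (\<lambda>_. u) z | z. \<phi> j z = y}"
  have bdd: "bdd_above G" unfolding G_def using fzprod_01[OF u] by (intro bdd_aboveI[of _ 1]) auto
  have eq: "fzi j u y = Sup G" unfolding fzi_def fz_image_def G_def using True' by simp
  have "fz_prod (\<lambda>_. u) z \<in> G" unfolding G_def using z by blast
  then show ?thesis unfolding eq by (rule cSup_upper[OF _ bdd])
qed

lemma fzi_less:
  assumes u: "fuzzy_set u" and t: "0 \<le> t" "t < fzi j u y"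
  shows "\<exists>z. \<phi> j z = y \<and> t < fz_prod (\<lambda>_. u) z"
proof -
  have True': "y \<in> range (\<phi> j)"
  proof (rule ccontr)
    assume "y \<notin> range (\<phi> j)" then have "fzi j u y = 0" unfolding fzi_def fz_image_def by simp
    then show False using t by simp
  qed
  define G where "G = {fz_prod (\<lambda>_. u) z | z. \<phi> j z = y}"
  have Gne: "G \<noteq> {}" using True' unfolding G_def by auto
  have bdd: "bdd_above G" unfolding G_def using fzprod_01[OF u] by (intro bdd_aboveI[of _ 1]) auto
  have eq: "fzi j u y = Sup G" unfolding fzi_def fz_image_def G_def using True' by simp
  have "\<exists>g\<in>G. t < g" using t(2) unfolding eq using less_cSup_iff[OF Gne bdd] by blast
  then show ?thesis unfolding G_def by blast
qed

lemma fzi_mono: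
  assumes u: "fuzzy_set u" and u': "fuzzy_set u'" and le: "\<And>x. u x \<le> u' x"
  shows "fzi j u y \<le> fzi j u' y"
proof (cases "y \<in> range (\<phi> j)")
  case False then show ?thesis unfolding fzi_def fz_image_def by simp
next
  case True
  define G where "G = {fz_prod (\<lambda>_. u) z | z. \<phi> j z = y}"
  have Gne: "G \<noteq> {}" using True unfolding G_def by auto
  have eq: "fzi j u y = Sup G" unfolding fzi_def fz_image_def G_def using True by simp
  have "\<And>g. g \<in> G \<Longrightarrow> g \<le> fzi j u' y"
  proof -
    fix g assume "g \<in> G"
    then obtain z where z: "\<phi> j z = y" "g = fz_prod (\<lambda>_. u) z" unfolding G_def by blast
    have "g \<le> fz_prod (\<lambda>_. u') z" unfolding fzprod_ge
    proof
      fix i show "g \<le> u' (z $ i)" using fzprod_le[of u z i] le[of "z $ i"] z(2) by simp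
    qed
    also have "\<dots> \<le> fzi j u' y" by (rule fzi_ge[OF u' z(1)])
    finally show "g \<le> fzi j u' y" .
  qed
  then show ?thesis unfolding eq using Gne by (intro cSup_least) auto
qed

lemma fzi_level:
  assumes u: "u \<in> Fstar" and b: "\<beta> > 0" and j: "j < n"
  shows "\<beta> \<le> fzi j u y \<longleftrightarrow> y \<in> \<phi> j ` cube (lev u \<beta>)"
proof
  have fu: "fuzzy_set u" using u unfolding Fstar_def by blast
  assume ge: "\<beta> \<le> fzi j u y"
  define E0 where "E0 = {z. \<phi> j z = y} \<inter> cube (lev u (\<beta>/2))"
  have "E0 \<inter> (\<Inter>t\<in>{\<beta>/2..<\<beta>}. cube (lev u t)) \<noteq> {}"
  proof (rule compact_imp_fip_image)
    have "\<beta>/2 > 0" using b by simp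
    then show "compact E0" unfolding E0_def
      by (rule closed_Int_compact[OF fibre_closed[OF j] compact_cube[OF lev_compact[OF u]]])
    show "\<And>t. t \<in> {\<beta>/2..<\<beta>} \<Longrightarrow> closed (cube (lev u t))"
      using lev_compact[OF u] b by (intro compact_imp_closed compact_cube) auto
    fix I' assume I': "finite I'" "I' \<subseteq> {\<beta>/2..<\<beta>}"
    define t where "t = Max (insert (\<beta>/2) I')"
    have tI: "t \<in> insert (\<beta>/2) I'" unfolding t_def using I'(1) by (intro Max_in) auto
    then have tlt: "t < \<beta>" "0 \<le> t" using I'(2) b by auto
    have tge: "\<And>s. s \<in> insert (\<beta>/2) I' \<Longrightarrow> s \<le> t" unfolding t_def using I'(1) by auto
    have "t < fzi j u y" using tlt(1) ge by linarith
    then obtain z where z: "\<phi> j z = y" "t < fz_prod (\<lambda>_. u) z"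
      using fzi_less[OF fu tlt(2)] by blast
    have zi: "\<And>i. t < u (z $ i)" using z(2) fzprod_le[of u z] by (meson less_le_trans)
    have zs: "\<And>s i. s \<in> insert (\<beta>/2) I' \<Longrightarrow> s \<le> u (z $ i)"
      using zi tge by (meson less_imp_le order_trans)
    have "z \<in> E0" unfolding E0_def lev_def cube_def using z(1) zs by blast
    moreover have "z \<in> (\<Inter>s\<in>I'. cube (lev u s))"
      unfolding lev_def cube_def using zs by blast
    ultimately show "E0 \<inter> (\<Inter>s\<in>I'. cube (lev u s)) \<noteq> {}" by blast
  qed
  then obtain z where z: "z \<in> E0" "\<And>t. t \<in> {\<beta>/2..<\<beta>} \<Longrightarrow> z \<in> cube (lev u t)" by blast
  have "\<And>i. \<beta> \<le> u (z $ i)"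
  proof -
    fix i show "\<beta> \<le> u (z $ i)"
    proof (rule dense_le_bounded[of "\<beta>/2"])
      show "\<beta>/2 < \<beta>" using b by simp
      fix w assume "\<beta>/2 < w" "w < \<beta>"
      then show "w \<le> u (z $ i)" using z(2)[of w] unfolding cube_def lev_def by auto
    qed
  qed
  then have "z \<in> cube (lev u \<beta>)" unfolding cube_def lev_def by simp
  then show "y \<in> \<phi> j ` cube (lev u \<beta>)" using z(1) unfolding E0_def by force
next
  have fu: "fuzzy_set u" using u unfolding Fstar_def by blast
  assume "y \<in> \<phi> j ` cube (lev u \<beta>)"
  then obtain z where z: "z \<in> cube (lev u \<beta>)" "\<phi> j z = y" by blast
  have "\<beta> \<le> fz_prod (\<lambda>_. u) z" using z(1) unfolding fzprod_ge cube_def lev_def by simp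
  also have "\<dots> \<le> fzi j u y" by (rule fzi_ge[OF fu z(2)])
  finally show "\<beta> \<le> fzi j u y" .
qed


definition Tset :: "nat \<Rightarrow> real \<Rightarrow> real set" where
  "Tset j a = {t \<in> {0..1}. a \<le> \<rho> j t}"

definition bet :: "nat \<Rightarrow> real \<Rightarrow> real" where
  "bet j a = Inf (Tset j a)"

lemma bet_props:
  assumes j: "j < n" and a: "a > 0" and T: "Tset j a \<noteq> {}"
  shows "bet j a \<in> Tset j a" "0 < bet j a" "bet j a \<le> 1"
proof -
  define T where "T = Tset j a"
  define \<beta> where "\<beta> = bet j a"
  have bdd: "bdd_below T" unfolding T_def Tset_def by (rule bdd_belowI[of _ 0]) auto
  have Tne: "T \<noteq> {}" using T unfolding T_def .
  have low: "\<And>t. t \<in> T \<Longrightarrow> \<beta> \<le> t" unfolding \<beta>_def bet_def T_def[symmetric]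
    by (rule cInf_lower[OF _ bdd])
  have b0: "0 \<le> \<beta>" unfolding \<beta>_def bet_def T_def[symmetric]
    by (rule cInf_greatest[OF Tne]) (auto simp: T_def Tset_def)
  obtain t0 where t0: "t0 \<in> T" using Tne by blast
  have b1: "\<beta> \<le> 1" using low[OF t0] t0 unfolding T_def Tset_def by auto
  have bT: "\<beta> \<in> T"
  proof (rule ccontr)
    assume nb: "\<beta> \<notin> T"
    then have lt: "\<rho> j \<beta> < a" using b0 b1 unfolding T_def Tset_def by auto
    show False
    proof (cases "\<beta> < 1")
      case False
      then have "\<beta> = 1" using b1 by simp
      then have "t0 = \<beta>" using low[OF t0] t0 unfolding T_def Tset_def by auto
      then show False using nb t0 by simp
    next
      case True
      have "continuous (at_right \<beta>) (\<rho> j)" by (rule rhoright[OF j b0 True])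
      then have "(\<rho> j \<longlongrightarrow> \<rho> j \<beta>) (at_right \<beta>)" by (simp add: continuous_within)
      then have "eventually (\<lambda>x. dist (\<rho> j x) (\<rho> j \<beta>) < a - \<rho> j \<beta>) (at_right \<beta>)"
        using lt by (intro tendstoD) auto
      then obtain b where b: "b > \<beta>" and bb: "\<And>y. \<beta> < y \<Longrightarrow> y < b \<Longrightarrow> dist (\<rho> j y) (\<rho> j \<beta>) < a - \<rho> j \<beta>"
        unfolding eventually_at_right_field by blast
      have "\<exists>t\<in>T. t < b" using b unfolding \<beta>_def bet_def T_def[symmetric] using cInf_less_iff[OF Tne bdd] by blast
      then obtain t where t: "t \<in> T" "t < b" by blast
      have "\<beta> \<le> t" by (rule low[OF t(1)])
      moreover have "t \<noteq> \<beta>" using t(1) nb by blast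
      ultimately have "\<beta> < t" by simp
      then have "dist (\<rho> j t) (\<rho> j \<beta>) < a - \<rho> j \<beta>" using bb t(2) by blast
      then have "\<rho> j t < a" by (simp add: dist_real_def abs_less_iff)
      then show False using t(1) unfolding T_def Tset_def by simp
    qed
  qed
  show "bet j a \<in> Tset j a" using bT unfolding T_def \<beta>_def .
  show "bet j a \<le> 1" using b1 unfolding \<beta>_def .
  have "\<beta> \<noteq> 0"
  proof
    assume "\<beta> = 0"
    then have "a \<le> \<rho> j 0" using bT unfolding T_def Tset_def by simp
    then show False using rho0[OF j] a by simp
  qed
  then show "0 < bet j a" using b0 unfolding \<beta>_def by simp
qed

lemma rho_level:
  assumes j: "j < n" and a: "a > 0" and g: "0 \<le> g" "g \<le> 1"
  shows "a \<le> \<rho> j g \<longleftrightarrow> (Tset j a \<noteq> {} \<and> bet j a \<le> g)"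
proof
  assume ag: "a \<le> \<rho> j g"
  then have gT: "g \<in> Tset j a" unfolding Tset_def using g by simp
  have bdd: "bdd_below (Tset j a)" unfolding Tset_def by (rule bdd_belowI[of _ 0]) auto
  have "bet j a \<le> g" unfolding bet_def by (rule cInf_lower[OF gT bdd])
  then show "Tset j a \<noteq> {} \<and> bet j a \<le> g" using gT by blast
next
  assume h: "Tset j a \<noteq> {} \<and> bet j a \<le> g"
  then have "bet j a \<in> Tset j a" using bet_props[OF j a] by blast
  then have "a \<le> \<rho> j (bet j a)" "0 \<le> bet j a" unfolding Tset_def by auto
  moreover have "\<rho> j (bet j a) \<le> \<rho> j g" using rhomono[OF j] calculation(2) h g by blast
  ultimately show "a \<le> \<rho> j g" by simp
qed

lemma Z_level:
  assumes u: "u \<in> Fstar" and a: "a > 0"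
  shows "a \<le> Z u y \<longleftrightarrow> (\<exists>j<n. Tset j a \<noteq> {} \<and> y \<in> \<phi> j ` cube (lev u (bet j a)))"
proof -
  have fu: "fuzzy_set u" using u unfolding Fstar_def by blast
  have "a \<le> Z u y \<longleftrightarrow> (\<exists>j<n. a \<le> \<rho> j (fzi j u y))"
    unfolding Z_eq using npos by (subst Max_ge_iff) auto
  also have "\<dots> \<longleftrightarrow> (\<exists>j<n. Tset j a \<noteq> {} \<and> bet j a \<le> fzi j u y)"
    using rho_level[OF _ a] fzi_bounds[OF fu] by blast
  also have "\<dots> \<longleftrightarrow> (\<exists>j<n. Tset j a \<noteq> {} \<and> y \<in> \<phi> j ` cube (lev u (bet j a)))"
    using fzi_level[OF u] bet_props(2)[OF _ a] by blast
  finally show ?thesis .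
qed

lemma Z_range:
  assumes u: "fuzzy_set u" shows "0 \<le> Z u y \<and> Z u y \<le> 1"
proof -
  have r: "\<And>j. j < n \<Longrightarrow> 0 \<le> \<rho> j (fzi j u y) \<and> \<rho> j (fzi j u y) \<le> 1"
    using rho01 fzi_bounds[OF u] by blast
  have "0 \<le> Z u y" unfolding Z_eq using npos r by (subst Max_ge_iff) auto
  moreover have "Z u y \<le> 1" unfolding Z_eq using npos r by (subst Max_le_iff) auto
  ultimately show ?thesis by simp
qed

lemma Z_mono:
  assumes u: "fuzzy_set u" and u': "fuzzy_set u'" and le: "\<And>x. u x \<le> u' x"
  shows "Z u y \<le> Z u' y"
proof -
  have "\<And>j. j < n \<Longrightarrow> \<rho> j (fzi j u y) \<le> Z u' y"
  proof -
    fix j assume j: "j < n"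
    have "\<rho> j (fzi j u y) \<le> \<rho> j (fzi j u' y)"
      using fzi_mono[OF u u' le] fzi_bounds[OF u] fzi_bounds[OF u'] by (intro rhomono[OF j]) auto
    also have "\<dots> \<le> Z u' y" unfolding Z_eq using j by (intro Max_ge) auto
    finally show "\<rho> j (fzi j u y) \<le> Z u' y" .
  qed
  then show ?thesis unfolding Z_eq[of u] using npos by (subst Max_le_iff) auto
qed

lemma Z_Fstar:
  assumes u: "u \<in> Fstar" shows "Z u \<in> Fstar"
proof -
  have fu: "fuzzy_set u" using u unfolding Fstar_def by blast
  have fs: "fuzzy_set (Z u)" unfolding fuzzy_set_def using Z_range[OF fu] by blast
  obtain x where x: "u x = 1" using u unfolding Fstar_def by blast
  obtain j where j: "j < n" "\<rho> j 1 = 1" using rho1 by blast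
  define xv :: "'a^'m" where "xv = (\<chi> i. x)"
  define y where "y = \<phi> j xv"
  have "1 \<le> fz_prod (\<lambda>_. u) xv" unfolding fzprod_ge xv_def using x by simp
  also have "\<dots> \<le> fzi j u y" unfolding y_def by (rule fzi_ge[OF fu]) simp
  finally have "fzi j u y = 1" using fzi_bounds[OF fu, of j y] by simp
  then have "1 \<le> \<rho> j (fzi j u y)" using j by simp
  also have "\<dots> \<le> Z u y" unfolding Z_eq using j by (intro Max_ge) auto
  finally have "1 \<le> Z u y" .
  then have norm: "Z u y = 1" using Z_range[OF fu, of y] by simp
  have cl: "closed {x. \<alpha> \<le> Z u x}" for \<alpha>
  proof (cases "\<alpha> \<le> 0")
    case True
    have "\<And>x. \<alpha> \<le> Z u x" using Z_range[OF fu] True order_trans by blast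
    then have "{x. \<alpha> \<le> Z u x} = UNIV" by blast
    then show ?thesis by simp
  next
    case False
    then have a: "\<alpha> > 0" by simp
    have "{x. \<alpha> \<le> Z u x} = (\<Union>j\<in>{j. j < n \<and> Tset j \<alpha> \<noteq> {}}. \<phi> j ` cube (lev u (bet j \<alpha>)))"
      using Z_level[OF u a] by blast
    also have "closed \<dots>"
    proof (rule closed_UN)
      show "finite {j. j < n \<and> Tset j \<alpha> \<noteq> {}}" by simp
      show "\<forall>j\<in>{j. j < n \<and> Tset j \<alpha> \<noteq> {}}. closed (\<phi> j ` cube (lev u (bet j \<alpha>)))"
        using phi_compact lev_compact[OF u] bet_props(2)[OF _ a] by (blast intro: compact_imp_closed)
    qed
    finally show ?thesis .
  qed
  have sub: "{x. 0 < Z u x} \<subseteq> F (fuzzy_support u)"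
  proof
    fix y assume "y \<in> {x. 0 < Z u x}"
    then have "0 < Z u y" by simp
    have "\<not> (\<forall>j<n. \<rho> j (fzi j u y) \<le> 0)"
    proof
      assume all: "\<forall>j<n. \<rho> j (fzi j u y) \<le> 0"
      have "Z u y \<le> 0" unfolding Z_eq using npos all by (subst Max_le_iff) auto
      then show False using \<open>0 < Z u y\<close> by simp
    qed
    then obtain j where j: "j < n" "0 < \<rho> j (fzi j u y)" by (meson not_le)
    have "fzi j u y \<noteq> 0"
    proof
      assume "fzi j u y = 0"
      then have "\<rho> j (fzi j u y) = 0" using rho0[OF j(1)] by simp
      then show False using j(2) by simp
    qed
    then have fpos: "0 < fzi j u y" using fzi_bounds[OF fu, of j y] by simp
    obtain z where z: "\<phi> j z = y" "0 < fz_prod (\<lambda>_. u) z"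
      using fzi_less[OF fu order.refl fpos] by blast
    have zi: "0 < u (z $ i)" for i using z(2) fzprod_le[of u z i] by linarith
    have "z $ i \<in> fuzzy_support u" for i
      unfolding fuzzy_support_def using zi[of i] closure_subset[of "{x. 0 < u x}"] by blast
    then have "z \<in> cube (fuzzy_support u)" unfolding cube_def by blast
    then show "y \<in> F (fuzzy_support u)" using j(1) z(1) unfolding F_def' by blast
  qed
  have cF: "compact (F (fuzzy_support u))" using u unfolding Fstar_def by (blast intro: F_compact)
  have csub: "closure {x. 0 < Z u x} \<subseteq> F (fuzzy_support u)"
    by (rule closure_minimal[OF sub compact_imp_closed[OF cF]])
  have "compact (closure {x. 0 < Z u x} \<inter> F (fuzzy_support u))"
    by (rule closed_Int_compact[OF closed_closure cF])
  moreover have "closure {x. 0 < Z u x} \<inter> F (fuzzy_support u) = closure {x. 0 < Z u x}"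
    using csub by blast
  ultimately have "compact (fuzzy_support (Z u))" unfolding fuzzy_support_def by simp
  then show ?thesis unfolding Fstar_def using fs norm cl by blast
qed

end



context gifzs
begin

lemma fuzzy_le:
  assumes p: "p \<in> Fstar" and q: "q \<in> Fstar"
    and Pp: "\<And>a x. 0 < a \<Longrightarrow> a \<le> 1 \<Longrightarrow> a \<le> p x \<Longrightarrow> a \<le> Z p x"
    and Qq: "\<And>a x. 0 < a \<Longrightarrow> a \<le> 1 \<Longrightarrow> a \<le> Z q x \<Longrightarrow> a \<le> q x"
  shows "p x \<le> q x"
proof -
  define R where "R = diameter (fuzzy_support p \<union> fuzzy_support q)"
  have bnd: "bounded (fuzzy_support p \<union> fuzzy_support q)"
    using p q unfolding Fstar_def by (blast intro: compact_imp_bounded compact_Un)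
  have levsub: "lev p a \<subseteq> lev q a" if a: "a \<in> {0<..1}" for a
  proof (rule excess[where I="{0<..1}" and P="lev p" and Q="lev q" and R=R, OF _ _ _ a])
    fix b assume b: "b \<in> {0<..(1::real)}"
    show "compact (lev q b) \<and> lev q b \<noteq> {}"
      using lev_compact[OF q] lev_nonempty[OF q] b by auto
  next
    fix b x assume b: "b \<in> {0<..(1::real)}" and x: "x \<in> lev p b"
    obtain q0 where q0: "q0 \<in> lev q b" using lev_nonempty[OF q] b by fastforce
    have "x \<in> fuzzy_support p" using lev_supp[of b p] b x by auto
    moreover have "q0 \<in> fuzzy_support q" using lev_supp[of b q] b q0 by auto
    ultimately have "dist x q0 \<le> R" unfolding R_def using bnd by (intro diameter_bounded_bound) auto
    then show "infdist x (lev q b) \<le> R" using infdist_le[OF q0, of x] by simp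
  next
    fix b x assume b: "b \<in> {0<..(1::real)}" and x: "x \<in> lev p b"
    have b0: "0 < b" "b \<le> 1" using b by auto
    have "b \<le> Z p x" using Pp[OF b0] x unfolding lev_def by simp
    then obtain j where j: "j < n" "Tset j b \<noteq> {}" "x \<in> \<phi> j ` cube (lev p (bet j b))"
      using Z_level[OF p b0(1)] by blast
    have bI: "bet j b \<in> {0<..1}" using bet_props[OF j(1) b0(1) j(2)] by simp
    have "\<forall>y\<in>cube (lev q (bet j b)). \<phi> j y \<in> lev q b"
    proof
      fix y :: "'a^'m" assume "y \<in> cube (lev q (bet j b))"
      then have "\<phi> j y \<in> \<phi> j ` cube (lev q (bet j b))" by blast
      then have "b \<le> Z q (\<phi> j y)" using Z_level[OF q b0(1)] j(1,2) by blast
      then show "\<phi> j y \<in> lev q b" using Qq[OF b0] unfolding lev_def by simp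
    qed
    then show "\<exists>j<n. \<exists>c\<in>{0<..1}. \<exists>z\<in>cube (lev p c). x = \<phi> j z \<and> (\<forall>y\<in>cube (lev q c). \<phi> j y \<in> lev q b)"
      using j(1,3) bI by blast
  qed
  show ?thesis
  proof (cases "p x \<le> 0")
    case True then show ?thesis using Fstar_01[OF q, of x] by simp
  next
    case False
    then have "p x \<in> {0<..1}" using Fstar_01[OF p, of x] by simp
    moreover have "x \<in> lev p (p x)" unfolding lev_def by simp
    ultimately have "x \<in> lev q (p x)" using levsub by blast
    then show ?thesis unfolding lev_def by simp
  qed
qed


lemma fuzzy_exists: "\<exists>u. u \<in> Fstar \<and> Z u = u"
proof -
  obtain K where K: "compact K" "K \<noteq> {}" "F K \<subseteq> K" using exists_invariant by blast
  define w0 where "w0 x = (if x \<in> K then 1 else (0::real))" for x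
  have levw0: "{x. \<alpha> \<le> w0 x} = (if \<alpha> \<le> 0 then UNIV else if \<alpha> \<le> 1 then K else {})" for \<alpha>
    by (auto simp: w0_def)
  have posw0: "{x. 0 < w0 x} = K" by (auto simp: w0_def)
  have w0F: "w0 \<in> Fstar"
  proof -
    have "fuzzy_set w0" unfolding fuzzy_set_def w0_def by simp
    moreover obtain k where "k \<in> K" using K by blast
    then have "w0 k = 1" by (simp add: w0_def)
    moreover have "closed {x. \<alpha> \<le> w0 x}" for \<alpha>
      unfolding levw0 using compact_imp_closed[OF K(1)] by simp
    moreover have "compact (fuzzy_support w0)" unfolding fuzzy_support_def posw0
      using K(1) by (simp add: compact_imp_closed closure_closed)
    ultimately show ?thesis unfolding Fstar_def by blast
  qed
  have fw0: "fuzzy_set w0" using w0F unfolding Fstar_def by blast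
  have Zw0: "Z w0 y \<le> w0 y" for y
  proof (cases "y \<in> K")
    case True then show ?thesis using Z_range[OF fw0, of y] by (simp add: w0_def)
  next
    case False
    have "\<And>j. j < n \<Longrightarrow> \<rho> j (fzi j w0 y) \<le> 0"
    proof -
      fix j assume j: "j < n"
      have "fzi j w0 y = 0"
      proof (rule ccontr)
        assume "fzi j w0 y \<noteq> 0"
        then have fpos: "0 < fzi j w0 y" using fzi_bounds[OF fw0, of j y] by simp
        obtain z where z: "\<phi> j z = y" "0 < fz_prod (\<lambda>_. w0) z"
          using fzi_less[OF fw0 order.refl fpos] by blast
        have "0 < w0 (z $ i)" for i using z(2) fzprod_le[of w0 z i] by linarith
        then have "z $ i \<in> K" for i using posw0 by blast
        then have "z \<in> cube K" unfolding cube_def by blast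
        then have "y \<in> F K" using j z(1) unfolding F_def' by blast
        then show False using K(3) False by blast
      qed
      then show "\<rho> j (fzi j w0 y) \<le> 0" using rho0[OF j] by simp
    qed
    then have "Z w0 y \<le> 0" unfolding Z_eq using npos by (subst Max_le_iff) auto
    then show ?thesis using False by (simp add: w0_def)
  qed
  define w where "w k = (Z ^^ k) w0" for k
  have wS: "w (Suc k) = Z (w k)" for k unfolding w_def by simp
  have w0eq: "w 0 = w0" unfolding w_def by simp
  have wF: "w k \<in> Fstar" for k
    by (induction k) (simp_all add: w0eq w0F wS Z_Fstar)
  have wfs: "fuzzy_set (w k)" for k using wF[of k] unfolding Fstar_def by blast
  have wdec: "w (Suc k) y \<le> w k y" for k y
  proof (induction k arbitrary: y)
    case 0 then show ?case using Zw0 by (simp add: wS w0eq)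
  next
    case (Suc k)
    have "Z (w (Suc k)) y \<le> Z (w k) y" by (rule Z_mono[OF wfs wfs Suc.IH])
    then show ?case by (simp only: wS)
  qed
  have wmono: "k \<le> k' \<Longrightarrow> w k' y \<le> w k y" for k k' y
    by (rule lift_Suc_antimono_le[of "\<lambda>k. w k y", OF wdec])
  have w01: "0 \<le> w k y \<and> w k y \<le> 1" for k y by (rule Fstar_01[OF wF])
  define u where "u y = Inf (range (\<lambda>k. w k y))" for y
  have bddb: "bdd_below (range (\<lambda>k. w k y))" for y
    by (rule bdd_belowI[of _ 0]) (use w01 in auto)
  have u_le: "u y \<le> w k y" for k y unfolding u_def by (rule cInf_lower[OF _ bddb]) simp
  have u_ge: "a \<le> u y" if "\<And>k. a \<le> w k y" for a y
    unfolding u_def by (rule cInf_greatest) (use that in auto)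
  have levu: "lev u a = (\<Inter>k. lev (w k) a)" for a
  proof
    show "lev u a \<subseteq> (\<Inter>k. lev (w k) a)" unfolding lev_def using u_le order_trans by blast
    show "(\<Inter>k. lev (w k) a) \<subseteq> lev u a" unfolding lev_def using u_ge by blast
  qed
  have u01: "0 \<le> u y \<and> u y \<le> 1" for y
  proof -
    have "0 \<le> u y" using w01 by (intro u_ge) blast
    moreover have "u y \<le> 1" using u_le[of y 0] w01[of 0 y] by linarith
    ultimately show ?thesis by simp
  qed
  have uF: "u \<in> Fstar"
  proof -
    have "fuzzy_set u" unfolding fuzzy_set_def using u01 by blast
    moreover have "(\<Inter>k. lev (w k) 1) \<noteq> {}"
    proof (rule compact_nest)
      show "compact (lev (w k) 1)" for k by (rule lev_compact[OF wF]) simp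
      show "lev (w k) 1 \<noteq> {}" for k by (rule lev_nonempty[OF wF]) simp
      show "k \<le> k' \<Longrightarrow> lev (w k') 1 \<subseteq> lev (w k) 1" for k k'
        unfolding lev_def using wmono order_trans by blast
    qed
    then obtain x where "x \<in> lev u 1" unfolding levu by blast
    then have "u x = 1" using u01[of x] unfolding lev_def by simp
    moreover have "closed {x. \<alpha> \<le> u x}" for \<alpha>
    proof -
      have "{x. \<alpha> \<le> u x} = (\<Inter>k. {x. \<alpha> \<le> w k x})" using levu[of \<alpha>] unfolding lev_def by simp
      moreover have "closed (\<Inter>k. {x. \<alpha> \<le> w k x})"
        using wF unfolding Fstar_def by (intro closed_INT) blast
      ultimately show ?thesis by simp
    qed
    moreover have "compact (fuzzy_support u)"
    proof -
      have "{x. 0 < u x} \<subseteq> K"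
      proof
        fix x assume "x \<in> {x. 0 < u x}"
        then have "0 < w0 x" using u_le[of x 0] w0eq by simp
        then show "x \<in> K" using posw0 by blast
      qed
      then have cs: "fuzzy_support u \<subseteq> K" unfolding fuzzy_support_def
        by (rule closure_minimal[OF _ compact_imp_closed[OF K(1)]])
      have "compact (fuzzy_support u \<inter> K)"
        unfolding fuzzy_support_def by (rule closed_Int_compact[OF closed_closure K(1)])
      moreover have "fuzzy_support u \<inter> K = fuzzy_support u" using cs by blast
      ultimately show ?thesis by simp
    qed
    ultimately show ?thesis unfolding Fstar_def by blast
  qed
  have fu: "fuzzy_set u" using uF unfolding Fstar_def by blast
  have Zu: "Z u y = u y" for y
  proof (rule antisym)
    show "Z u y \<le> u y"
    proof (rule u_ge)
      fix k
      have "Z u y \<le> Z (w k) y" by (rule Z_mono[OF fu wfs u_le])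
      also have "\<dots> = w (Suc k) y" by (simp add: wS)
      also have "\<dots> \<le> w k y" by (rule wdec)
      finally show "Z u y \<le> w k y" .
    qed
    show "u y \<le> Z u y"
    proof (cases "u y \<le> 0")
      case True then show ?thesis using Z_range[OF fu, of y] by simp
    next
      case False
      define a where "a = u y"
      have a: "a > 0" using False unfolding a_def by simp
      have ex: "\<exists>j<n. Tset j a \<noteq> {} \<and> y \<in> \<phi> j ` cube (lev (w k) (bet j a))" for k
      proof -
        have "a \<le> w (Suc k) y" unfolding a_def by (rule u_le)
        then have "a \<le> Z (w k) y" by (simp add: wS)
        then show ?thesis using Z_level[OF wF a] by blast
      qed
      have mon: "Tset j a \<noteq> {} \<and> y \<in> \<phi> j ` cube (lev (w k) (bet j a))"
        if "k \<le> k'" "Tset j a \<noteq> {} \<and> y \<in> \<phi> j ` cube (lev (w k') (bet j a))" for j k k'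
      proof -
        have "lev (w k') (bet j a) \<subseteq> lev (w k) (bet j a)"
          unfolding lev_def using wmono[OF that(1)] order_trans by blast
        then have "cube (lev (w k') (bet j a)) \<subseteq> cube (lev (w k) (bet j a))" by (rule cube_mono)
        then show ?thesis using that(2) by blast
      qed
      have "\<exists>j<n. \<forall>k. Tset j a \<noteq> {} \<and> y \<in> \<phi> j ` cube (lev (w k) (bet j a))"
      proof (rule finite_choice_mono)
        fix k show "\<exists>j<n. Tset j a \<noteq> {} \<and> y \<in> \<phi> j ` cube (lev (w k) (bet j a))" by (rule ex)
      next
        fix j k k' assume "k \<le> (k'::nat)" "Tset j a \<noteq> {} \<and> y \<in> \<phi> j ` cube (lev (w k') (bet j a))"
        then show "Tset j a \<noteq> {} \<and> y \<in> \<phi> j ` cube (lev (w k) (bet j a))" by (rule mon)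
      qed
      then obtain j where j: "j < n" and jall: "\<And>k. Tset j a \<noteq> {} \<and> y \<in> \<phi> j ` cube (lev (w k) (bet j a))"
        by blast
      have T: "Tset j a \<noteq> {}" using jall[of 0] by blast
      define b where "b = bet j a"
      have b: "b > 0" unfolding b_def by (rule bet_props(2)[OF j a T])
      define E where "E k = {z. \<phi> j z = y} \<inter> cube (lev (w k) b)" for k
      have "(\<Inter>k. E k) \<noteq> {}"
      proof (rule compact_nest)
        show "compact (E k)" for k unfolding E_def
          by (rule closed_Int_compact[OF fibre_closed[OF j] compact_cube[OF lev_compact[OF wF b]]])
        show "E k \<noteq> {}" for k unfolding E_def using jall[of k] unfolding b_def by blast
        show "k \<le> k' \<Longrightarrow> E k' \<subseteq> E k" for k k'
        proof -
          assume kk: "k \<le> k'"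
          have "lev (w k') b \<subseteq> lev (w k) b"
            unfolding lev_def using wmono[OF kk] order_trans by blast
          then have "cube (lev (w k') b) \<subseteq> cube (lev (w k) b)" by (rule cube_mono)
          then show ?thesis unfolding E_def by blast
        qed
      qed
      then obtain z where z: "\<And>k. z \<in> E k" by blast
      then have "\<phi> j z = y" unfolding E_def by blast
      moreover have "z \<in> cube (lev u b)" using z unfolding E_def cube_def levu by blast
      ultimately have "y \<in> \<phi> j ` cube (lev u b)" by blast
      then have "a \<le> Z u y" using Z_level[OF uF a] j T unfolding b_def by blast
      then show ?thesis unfolding a_def .
    qed
  qed
  show ?thesis using uF Zu by blast
qed

lemma fuzzy_unique:
  assumes "u \<in> Fstar" "Z u = u" "u' \<in> Fstar" "Z u' = u'"
  shows "u = u'"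
proof
  fix x
  have "u x \<le> u' x" by (rule fuzzy_le) (use assms in simp_all)
  moreover have "u' x \<le> u x" by (rule fuzzy_le) (use assms in simp_all)
  ultimately show "u x = u' x" by simp
qed

lemma fuzzy_attractor_eq:
  assumes "u \<in> Fstar" "Z u = u"
  shows "fuzzy_attractor n \<phi> \<rho> = u"
  unfolding fuzzy_attractor_def
  by (rule the_equality) (use assms fuzzy_unique in blast)+


end

theorem mainTheorem15:
  fixes \<phi> :: "nat \<Rightarrow> ('a::complete_space)^'m \<Rightarrow> 'a"
    and \<rho> :: "nat \<Rightarrow> real \<Rightarrow> real"
    and n :: nat
    and B :: "'a set"
    and v :: "'a \<Rightarrow> real"
  assumes S: "matkowski_GIFS n \<phi>"
    and adm: "admissible n \<rho>"
    and B: "B \<noteq> {}" "compact B"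
    and v: "v \<in> Fstar"
  shows "(GIFZS_op n \<phi> \<rho> (\<lambda>_. v) \<le> v \<longrightarrow> fuzzy_attractor n \<phi> \<rho> \<le> v)
       \<and> (GIFS_op n \<phi> B \<subseteq> B \<longrightarrow> GIFS_attractor n \<phi> \<subseteq> B)
       \<and> (v \<le> GIFZS_op n \<phi> \<rho> (\<lambda>_. v) \<longrightarrow> v \<le> fuzzy_attractor n \<phi> \<rho>)
       \<and> (B \<subseteq> GIFS_op n \<phi> B \<longrightarrow> B \<subseteq> GIFS_attractor n \<phi>)"
proof -
  have "\<forall>j. \<exists>\<psi>::real \<Rightarrow> real. j < n \<longrightarrow> (mono_on {0..} \<psi> \<and> (\<forall>t\<ge>0. 0 \<le> \<psi> t)
           \<and> (\<forall>t>0. (\<lambda>k. (\<psi> ^^ k) t) \<longlonglongrightarrow> 0)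
           \<and> (\<forall>x y. dist (\<phi> j x) (\<phi> j y) \<le> \<psi> (dmax x y)))"
    using S unfolding matkowski_GIFS_def by blast
  then obtain \<psi> where \<psi>: "\<And>j. j < n \<Longrightarrow> mono_on {0..} (\<psi> j) \<and> (\<forall>t\<ge>0. 0 \<le> \<psi> j t)
           \<and> (\<forall>t>0. (\<lambda>k. (\<psi> j ^^ k) t) \<longlonglongrightarrow> 0)
           \<and> (\<forall>x y. dist (\<phi> j x) (\<phi> j y) \<le> \<psi> j (dmax x y))" by metis
  have npos: "0 < n" using adm unfolding admissible_def by auto
  interpret gifzs n \<phi> \<psi> \<rho>
  proof
    show "0 < n" by (rule npos)
    show "\<And>j. j < n \<Longrightarrow> continuous_on UNIV (\<phi> j)" using S unfolding matkowski_GIFS_def by blast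
    show "\<And>j. j < n \<Longrightarrow> mono_on {0..} (\<psi> j)" using \<psi> by blast
    show "\<And>j t. j < n \<Longrightarrow> 0 \<le> t \<Longrightarrow> 0 \<le> \<psi> j t" using \<psi> by blast
    show "\<And>j t. j < n \<Longrightarrow> t > 0 \<Longrightarrow> (\<lambda>k. (\<psi> j ^^ k) t) \<longlonglongrightarrow> 0" using \<psi> by blast
    show "\<And>j x y. j < n \<Longrightarrow> dist (\<phi> j x) (\<phi> j y) \<le> \<psi> j (dmax x y)" using \<psi> by blast
    show "admissible n \<rho>" by (rule adm)
  qed
  obtain A where A: "A \<noteq> {}" "compact A" "A = F A" using attractor_exists by blast
  have Aeq: "GIFS_attractor n \<phi> = A" by (rule GIFS_attractor_eq[OF A])
  obtain u where u: "u \<in> Fstar" "Z u = u" using fuzzy_exists by blast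
  have ueq: "fuzzy_attractor n \<phi> \<rho> = u" by (rule fuzzy_attractor_eq[OF u])
  have a: "u \<le> v" if h: "Z v \<le> v"
  proof (rule le_funI)
    fix x show "u x \<le> v x"
    proof (rule fuzzy_le[OF u(1) v])
      show "\<And>a x. 0 < a \<Longrightarrow> a \<le> 1 \<Longrightarrow> a \<le> u x \<Longrightarrow> a \<le> Z u x" using u(2) by simp
      show "\<And>a x. 0 < a \<Longrightarrow> a \<le> 1 \<Longrightarrow> a \<le> Z v x \<Longrightarrow> a \<le> v x"
        using h by (meson le_funD order_trans)
    qed
  qed
  have c: "v \<le> u" if h: "v \<le> Z v"
  proof (rule le_funI)
    fix x show "v x \<le> u x"
    proof (rule fuzzy_le[OF v u(1)])
      show "\<And>a x. 0 < a \<Longrightarrow> a \<le> 1 \<Longrightarrow> a \<le> Z u x \<Longrightarrow> a \<le> u x" using u(2) by simp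
      show "\<And>a x. 0 < a \<Longrightarrow> a \<le> 1 \<Longrightarrow> a \<le> v x \<Longrightarrow> a \<le> Z v x"
        using h by (meson le_funD order_trans)
    qed
  qed
  have b: "A \<subseteq> B" if "F B \<subseteq> B"
    by (rule crisp_le) (use A B that in auto)
  have d: "B \<subseteq> A" if "B \<subseteq> F B"
    by (rule crisp_le) (use A B that in auto)
  show ?thesis using a b c d Aeq ueq by blast
qed



end
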